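(* Every ice fork with exactly two frozen vertices is a brog quiver.
   Context: A quiver is a finite directed multigraph with no loops and no oriented 2-cycles, whose vertex set is partitioned into mutable and frozen vertices; arrows between two frozen vertices are ignored. $b_{ik}$ = number of arrows $i\to k$ minus number of arrows $k\to i$; mutable vertices are labelled $[n]$; $Q|_S$ is the induced subquiver on $S$. Abundant: at least 2 arrows between every pair of vertices at least one of which is mutable. $F^+(r)=\{i: r\to i\}$, $F^-(r)=\{j:j\to r\}$. A fork is an abundant non-acyclic quiver with at most one frozen vertex and a vertex $r$ (point of return) such that $b_{ij}>b_{ri}$ and $b_{ij}>b_{jr}$ for all $i\in F^+(r),j\in F^-(r)$, and the subquivers induced on $F^+(r)$ and $F^-(r)$ are acyclic. An ice fork with point of return $r$ is a quiver with mutable vertices $[n]$ and frozen vertices $u_1,\dots,u_m$ ($m\ge1$) such that each $Q|_{[n]\cup\{u_i\}}$ is a fork with point of return $r$. A mutable vertex adjacent to at least one frozen vertex is red (resp. green) if all arrows between it and frozen vertices point towards (resp. away from) it. Two mutable vertices $i,j$ are complementary if for every frozen vertex $u$ with $b_{iu}\ne0$ and $b_{ju}\ne0$, $b_{iu}$ and $b_{ju}$ have opposite signs. A quiver is brog if its mutable vertices can be coloured blue, red, orange and green such that: (1) the vertices coloured red are exactly the red vertices; (2) the vertices coloured green are exactly the green vertices; (3) each blue vertex $i$ has $b_{ij}\ge0$ for every red $j$ and $b_{ij}\le0$ for every green $j$; (4) each orange vertex $i$ has $b_{ij}\ge0$ for every green $j$ and $b_{ij}\le0$ for every red $j$; (5)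 every blue vertex and every orange vertex are complementary. *)

theory Defs
  imports Main
begin

text \<open>A quiver is encoded by its set of mutable vertices M, its set of frozen
vertices F and its exchange matrix b (b i k = #arrows i->k minus #arrows k->i).
Arrows between two frozen vertices are ignored throughout.\<close>

definition quiver :: "'v set \<Rightarrow> 'v set \<Rightarrow> ('v \<Rightarrow> 'v \<Rightarrow> int) \<Rightarrow> bool" where
  "quiver M F b \<longleftrightarrow> finite M \<and> finite F \<and> M \<inter> F = {} \<and>
     (\<forall>i j. b i j = - b j i)"

definition arr :: "'v set \<Rightarrow> ('v \<Rightarrow> 'v \<Rightarrow> int) \<Rightarrow> 'v \<Rightarrow> 'v \<Rightarrow> bool" where
  "arr M b i j \<longleftrightarrow> b i j > 0 \<and> (i \<in> M \<or> j \<in> M)"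

definition acyclic_on :: "'v set \<Rightarrow> ('v \<Rightarrow> 'v \<Rightarrow> int) \<Rightarrow> 'v set \<Rightarrow> bool" where
  "acyclic_on M b S \<longleftrightarrow> acyclic {(i, j). i \<in> S \<and> j \<in> S \<and> arr M b i j}"

definition abundant :: "'v set \<Rightarrow> 'v set \<Rightarrow> ('v \<Rightarrow> 'v \<Rightarrow> int) \<Rightarrow> bool" where
  "abundant M F b \<longleftrightarrow> (\<forall>i \<in> M \<union> F. \<forall>j \<in> M \<union> F. i \<noteq> j \<and> (i \<in> M \<or> j \<in> M) \<longrightarrow> \<bar>b i j\<bar> \<ge> 2)"

definition Fplus :: "'v set \<Rightarrow> 'v set \<Rightarrow> ('v \<Rightarrow> 'v \<Rightarrow> int) \<Rightarrow> 'v \<Rightarrow> 'v set" where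
  "Fplus M F b r = {i \<in> M \<union> F. arr M b r i}"

definition Fminus :: "'v set \<Rightarrow> 'v set \<Rightarrow> ('v \<Rightarrow> 'v \<Rightarrow> int) \<Rightarrow> 'v \<Rightarrow> 'v set" where
  "Fminus M F b r = {j \<in> M \<union> F. arr M b j r}"

definition fork :: "'v set \<Rightarrow> 'v set \<Rightarrow> ('v \<Rightarrow> 'v \<Rightarrow> int) \<Rightarrow> 'v \<Rightarrow> bool" where
  "fork M F b r \<longleftrightarrow> quiver M F b \<and> abundant M F b \<and> \<not> acyclic_on M b (M \<union> F) \<and>
     card F \<le> 1 \<and> r \<in> M \<union> F \<and>
     (\<forall>i \<in> Fplus M F b r. \<forall>j \<in> Fminus M F b r. b i j > b r i \<and> b i j > b j r) \<and>
     acyclic_on M b (Fplus M F b r) \<and> acyclic_on M b (Fminus M F b r)"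

definition ice_fork :: "'v set \<Rightarrow> 'v set \<Rightarrow> ('v \<Rightarrow> 'v \<Rightarrow> int) \<Rightarrow> 'v \<Rightarrow> bool" where
  "ice_fork M F b r \<longleftrightarrow> quiver M F b \<and> F \<noteq> {} \<and> (\<forall>u \<in> F. fork M {u} b r)"

definition red_vertex :: "'v set \<Rightarrow> 'v set \<Rightarrow> ('v \<Rightarrow> 'v \<Rightarrow> int) \<Rightarrow> 'v \<Rightarrow> bool" where
  "red_vertex M F b i \<longleftrightarrow> i \<in> M \<and> (\<exists>u \<in> F. b i u \<noteq> 0) \<and> (\<forall>u \<in> F. b i u \<le> 0)"

definition green_vertex :: "'v set \<Rightarrow> 'v set \<Rightarrow> ('v \<Rightarrow> 'v \<Rightarrow> int) \<Rightarrow> 'v \<Rightarrow> bool" where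
  "green_vertex M F b i \<longleftrightarrow> i \<in> M \<and> (\<exists>u \<in> F. b i u \<noteq> 0) \<and> (\<forall>u \<in> F. b i u \<ge> 0)"

definition complementary :: "'v set \<Rightarrow> ('v \<Rightarrow> 'v \<Rightarrow> int) \<Rightarrow> 'v \<Rightarrow> 'v \<Rightarrow> bool" where
  "complementary F b i j \<longleftrightarrow> (\<forall>u \<in> F. b i u \<noteq> 0 \<and> b j u \<noteq> 0 \<longrightarrow> b i u * b j u < 0)"

datatype colour = Blue | Red | Orange | Green

definition brog :: "'v set \<Rightarrow> 'v set \<Rightarrow> ('v \<Rightarrow> 'v \<Rightarrow> int) \<Rightarrow> bool" where
  "brog M F b \<longleftrightarrow> (\<exists>c :: 'v \<Rightarrow> colour.
     (\<forall>i \<in> M. c i = Red \<longleftrightarrow> red_vertex M F b i) \<and>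
     (\<forall>i \<in> M. c i = Green \<longleftrightarrow> green_vertex M F b i) \<and>
     (\<forall>i \<in> M. c i = Blue \<longrightarrow> (\<forall>j \<in> M. c j = Red \<longrightarrow> b i j \<ge> 0) \<and>
                                 (\<forall>j \<in> M. c j = Green \<longrightarrow> b i j \<le> 0)) \<and>
     (\<forall>i \<in> M. c i = Orange \<longrightarrow> (\<forall>j \<in> M. c j = Green \<longrightarrow> b i j \<ge> 0) \<and>
                                   (\<forall>j \<in> M. c j = Red \<longrightarrow> b i j \<le> 0)) \<and>
     (\<forall>i \<in> M. \<forall>j \<in> M. c i = Blue \<and> c j = Orange \<longrightarrow> complementary F b i j))"

end

theory Submission
  imports Defs
begin

lemma fork_anti: "fork M U b r \<Longrightarrow> b x y = - b y x"
  unfolding fork_def quiver_def by blast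

lemma fork_adj:
  assumes "fork M {u} b r" "x \<in> M \<union> {u}" "y \<in> M \<union> {u}" "x \<noteq> y" "x \<in> M \<or> y \<in> M"
  shows "b x y \<noteq> 0"
proof -
  have "\<bar>b x y\<bar> \<ge> 2" using assms unfolding fork_def abundant_def by blast
  then show ?thesis by auto
qed

lemma fork_cross:
  assumes f: "fork M {u} b r" and "r \<in> M" "x \<in> M \<union> {u}" "y \<in> M \<union> {u}" "b r x > 0" "b y r > 0"
  shows "b x y > 0"
proof -
  have "x \<in> Fplus M {u} b r" using assms by (auto simp: Fplus_def arr_def)
  moreover have "y \<in> Fminus M {u} b r" using assms by (auto simp: Fminus_def arr_def)
  ultimately have "b x y > b r x" using f unfolding fork_def by blast
  then show ?thesis using assms by linarith
qed

lemma acyc3: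
  assumes "acyclic_on M b S" "x \<in> S" "y \<in> S" "z \<in> S"
    "b x y > 0" "b y z > 0" "b z x > 0"
    "x \<in> M \<or> y \<in> M" "y \<in> M \<or> z \<in> M" "z \<in> M \<or> x \<in> M"
  shows False
proof -
  let ?R = "{(i, j). i \<in> S \<and> j \<in> S \<and> arr M b i j}"
  have "(x,y) \<in> ?R" "(y,z) \<in> ?R" "(z,x) \<in> ?R" using assms by (auto simp: arr_def)
  then have "(x,x) \<in> ?R\<^sup>+" by (meson trancl.trancl_into_trancl r_into_trancl)
  then show False using assms(1) unfolding acyclic_on_def acyclic_def by blast
qed

lemma fork_no3:
  assumes f: "fork M {u} b r" and rM: "r \<in> M"
    and xs: "x \<in> M \<union> {u}" and ys: "y \<in> M \<union> {u}" and zs: "z \<in> M \<union> {u}"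
    and d: "x \<noteq> y" "y \<noteq> z" "z \<noteq> x" "x \<noteq> r" "y \<noteq> r" "z \<noteq> r"
    and e: "b x y > 0" "b y z > 0" "b z x > 0"
  shows False
proof -
  have anti: "\<And>p q. b p q = - b q p" using fork_anti[OF f] .
  have nx: "b r x \<noteq> 0" using fork_adj[OF f _ xs] rM d by auto
  have ny: "b r y \<noteq> 0" using fork_adj[OF f _ ys] rM d by auto
  have nz: "b r z \<noteq> 0" using fork_adj[OF f _ zs] rM d by auto
  have xz: "b r z > 0" if "b r x > 0"
  proof (rule ccontr)
    assume "\<not> b r z > 0"
    then have "b z r > 0" using nz anti[of z r] by linarith
    then have "b x z > 0" using fork_cross[OF f rM xs zs that] by blast
    then show False using e anti[of x z] by linarith
  qed
  have zy: "b r y > 0" if "b r z > 0"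
  proof (rule ccontr)
    assume "\<not> b r y > 0"
    then have "b y r > 0" using ny anti[of y r] by linarith
    then have "b z y > 0" using fork_cross[OF f rM zs ys that] by blast
    then show False using e anti[of z y] by linarith
  qed
  have yx: "b r x > 0" if "b r y > 0"
  proof (rule ccontr)
    assume "\<not> b r x > 0"
    then have "b x r > 0" using nx anti[of x r] by linarith
    then have "b y x > 0" using fork_cross[OF f rM ys xs that] by blast
    then show False using e anti[of y x] by linarith
  qed
  have M2: "x \<in> M \<or> y \<in> M" "y \<in> M \<or> z \<in> M" "z \<in> M \<or> x \<in> M"
    using xs ys zs d by auto
  show False
  proof (cases "b r x > 0")
    case True
    then have "x \<in> Fplus M {u} b r" "y \<in> Fplus M {u} b r" "z \<in> Fplus M {u} b r"
      using xz zy xs ys zs rM by (auto simp: Fplus_def arr_def)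
    moreover have "acyclic_on M b (Fplus M {u} b r)" using f unfolding fork_def by blast
    ultimately show False using acyc3 e M2 by metis
  next
    case False
    then have "b r x < 0" "b r y < 0" "b r z < 0" using nx ny nz xz zy yx by linarith+
    then have "b x r > 0" "b y r > 0" "b z r > 0" using anti by (metis neg_less_0_iff_less)+
    then have "x \<in> Fminus M {u} b r" "y \<in> Fminus M {u} b r" "z \<in> Fminus M {u} b r"
      using xs ys zs rM by (auto simp: Fminus_def arr_def)
    moreover have "acyclic_on M b (Fminus M {u} b r)" using f unfolding fork_def by blast
    ultimately show False using acyc3 e M2 by metis
  qed
qed

theorem mainTheorem12:
  fixes M F :: "'v set" and b :: "'v \<Rightarrow> 'v \<Rightarrow> int" and r :: 'v
  assumes "ice_fork M F b r"
    and "card F = 2"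
  shows "brog M F b"
proof -
  have q: "quiver M F b" and fk: "\<And>u. u \<in> F \<Longrightarrow> fork M {u} b r"
    using assms(1) unfolding ice_fork_def by blast+
  have anti: "\<And>p q. b p q = - b q p" using q unfolding quiver_def by blast
  have disj: "M \<inter> F = {}" using q unfolding quiver_def by blast
  obtain u1 u2 where F12: "F = {u1, u2}" "u1 \<noteq> u2" using assms(2) card_2_iff by metis
  have rM: "r \<in> M"
  proof -
    have "r \<in> M \<union> {u1}" "r \<in> M \<union> {u2}" using fk[of u1] fk[of u2] F12 unfolding fork_def by auto
    then show ?thesis using F12 by auto
  qed
  have adj: "\<And>i u. i \<in> M \<Longrightarrow> u \<in> F \<Longrightarrow> b i u \<noteq> 0"
  proof -
    fix i u assume "i \<in> M" "u \<in> F"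
    moreover then have "i \<noteq> u" using disj by blast
    ultimately show "b i u \<noteq> 0" using fork_adj[OF fk[of u], of i u] by blast
  qed
  have adjM: "b i j \<noteq> 0" if "i \<in> M" "j \<in> M" "i \<noteq> j" "u \<in> F" for i j u
    using fork_adj[OF fk[OF that(4)], of i j] that by blast
  have Fne: "F \<noteq> {}" using F12 by blast
  have two: "\<And>v w x. v \<in> F \<Longrightarrow> w \<in> F \<Longrightarrow> x \<in> F \<Longrightarrow> v = w \<or> v = x \<or> w = x"
    using F12 by blast
  have notred: "\<exists>u\<in>F. b i u > 0" if "i \<in> M" "\<not> red_vertex M F b i" for i
  proof -
    have "\<exists>u\<in>F. b i u \<noteq> 0" using adj that(1) Fne by blast
    then show ?thesis using that unfolding red_vertex_def by force
  qed
  have notgreen: "\<exists>u\<in>F. b i u < 0" if "i \<in> M" "\<not> green_vertex M F b i" for i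
  proof -
    have "\<exists>u\<in>F. b i u \<noteq> 0" using adj that(1) Fne by blast
    then show ?thesis using that unfolding green_vertex_def by force
  qed
  have redpos: "b u i > 0" if "red_vertex M F b i" "u \<in> F" for i u
    using that adj[of i u] anti[of u i] unfolding red_vertex_def by force
  have greenpos: "b i u > 0" if "green_vertex M F b i" "u \<in> F" for i u
    using that adj[of i u] unfolding green_vertex_def by force
  have rg: "\<not> (red_vertex M F b i \<and> green_vertex M F b i)" for i
    unfolding red_vertex_def green_vertex_def by force
  have inMu: "\<And>i u. i \<in> M \<Longrightarrow> i \<in> M \<union> {u}" "\<And>u. u \<in> M \<union> {u}" by auto
  have uM: "\<And>i u. i \<in> M \<Longrightarrow> u \<in> F \<Longrightarrow> i \<noteq> u" using disj by blast
  define c where "c i = (if red_vertex M F b i then Red else if green_vertex M F b i then Green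
      else if i = r then Orange else Blue)" for i
  have C1: "\<forall>i \<in> M. c i = Red \<longleftrightarrow> red_vertex M F b i" unfolding c_def by simp
  have C2: "\<forall>i \<in> M. c i = Green \<longleftrightarrow> green_vertex M F b i" unfolding c_def using rg by auto
  have C3: "\<forall>i \<in> M. c i = Blue \<longrightarrow> (\<forall>j \<in> M. c j = Red \<longrightarrow> b i j \<ge> 0) \<and>
                                 (\<forall>j \<in> M. c j = Green \<longrightarrow> b i j \<le> 0)"
  proof (intro ballI impI conjI)
    fix i j assume iM: "i \<in> M" and ci: "c i = Blue" and jM: "j \<in> M"
    have nr: "\<not> red_vertex M F b i" and ng: "\<not> green_vertex M F b i" and ir: "i \<noteq> r"
      using ci unfolding c_def by (auto split: if_splits)
    obtain u where u: "u \<in> F" "b i u > 0" using notred[OF iM nr] by blast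
    obtain u' where u': "u' \<in> F" "b i u' < 0" using notgreen[OF iM ng] by blast
    {
      assume "c j = Red"
      then have rj: "red_vertex M F b j" using C1 jM by blast
      show "b i j \<ge> 0"
      proof (rule ccontr)
        assume "\<not> b i j \<ge> 0"
        then have ji: "b j i > 0" using anti[of i j] by linarith
        show False
        proof (cases "j = r")
          case True
          have "b i w > 0" if "w \<in> F" for w
            using fork_cross[OF fk[OF that] rM inMu(1)[OF iM] inMu(2)] ji True redpos[OF rj that] by blast
          then have "green_vertex M F b i" using iM u unfolding green_vertex_def by force
          then show False using ng by blast
        next
          case False
          have "b u j > 0" using redpos[OF rj u(1)] .
          moreover have "i \<noteq> j" using ji anti[of i i] by auto
          ultimately show False using fork_no3[OF fk[OF u(1)] rM inMu(1)[OF iM] inMu(2) inMu(1)[OF jM]]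
            uM[OF iM u(1)] uM[OF jM u(1)] uM[OF rM u(1)] ir False u(2) ji by metis
        qed
      qed
    next
      assume "c j = Green"
      then have gj: "green_vertex M F b j" using C2 jM by blast
      show "b i j \<le> 0"
      proof (rule ccontr)
        assume "\<not> b i j \<le> 0"
        then have ij: "b i j > 0" by linarith
        show False
        proof (cases "j = r")
          case True
          have "b w i > 0" if "w \<in> F" for w
            using fork_cross[OF fk[OF that] rM inMu(2) inMu(1)[OF iM]] ij True greenpos[OF gj that] by blast
          then have "red_vertex M F b i" using iM u anti unfolding red_vertex_def
            by (metis less_irrefl neg_0_less_iff_less order_less_imp_le not_less)
          then show False using nr by blast
        next
          case False
          have "b j u' > 0" using greenpos[OF gj u'(1)] .
          moreover have "b u' i > 0" using u'(2) anti[of u' i] by linarith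
          moreover have "i \<noteq> j" using ij anti[of i i] by auto
          ultimately show False using fork_no3[OF fk[OF u'(1)] rM inMu(1)[OF iM] inMu(1)[OF jM] inMu(2)]
            uM[OF iM u'(1)] uM[OF jM u'(1)] uM[OF rM u'(1)] ir False ij by metis
        qed
      qed
    }
  qed
  have C4: "\<forall>i \<in> M. c i = Orange \<longrightarrow> (\<forall>j \<in> M. c j = Green \<longrightarrow> b i j \<ge> 0) \<and>
                                   (\<forall>j \<in> M. c j = Red \<longrightarrow> b i j \<le> 0)"
  proof (intro ballI impI conjI)
    fix i j assume iM: "i \<in> M" and ci: "c i = Orange" and jM: "j \<in> M"
    have nr: "\<not> red_vertex M F b r" and ng: "\<not> green_vertex M F b r" and ir: "i = r"
      using ci unfolding c_def by (auto split: if_splits)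
    obtain u where u: "u \<in> F" "b r u > 0" using notred[OF rM nr] by blast
    obtain u' where u': "u' \<in> F" "b r u' < 0" using notgreen[OF rM ng] by blast
    {
      assume "c j = Green"
      then have gj: "green_vertex M F b j" using C2 jM by blast
      show "b i j \<ge> 0"
      proof (rule ccontr)
        assume "\<not> b i j \<ge> 0"
        then have "b j r > 0" using anti[of r j] ir by simp
        then have "b u j > 0" using fork_cross[OF fk[OF u(1)] rM inMu(2) inMu(1)[OF jM] u(2)] by blast
        then show False using greenpos[OF gj u(1)] anti[of u j] by linarith
      qed
    next
      assume "c j = Red"
      then have rj: "red_vertex M F b j" using C1 jM by blast
      show "b i j \<le> 0"
      proof (rule ccontr)
        assume "\<not> b i j \<le> 0"
        then have rjp: "b r j > 0" using ir by simp
        have "b u' r > 0" using u'(2) anti[of u' r] by linarith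
        then have "b j u' > 0" using fork_cross[OF fk[OF u'(1)] rM inMu(1)[OF jM] inMu(2) rjp] by blast
        then show False using redpos[OF rj u'(1)] anti[of u' j] by linarith
      qed
    }
  qed
  have C5: "\<forall>i \<in> M. \<forall>j \<in> M. c i = Blue \<and> c j = Orange \<longrightarrow> complementary F b i j"
  proof (intro ballI impI)
    fix i j assume iM: "i \<in> M" and jM: "j \<in> M" and cc: "c i = Blue \<and> c j = Orange"
    have nr: "\<not> red_vertex M F b i" and ng: "\<not> green_vertex M F b i" and ir: "i \<noteq> r"
      using cc unfolding c_def by (auto split: if_splits)
    have nr': "\<not> red_vertex M F b r" and ng': "\<not> green_vertex M F b r" and jr: "j = r"
      using cc unfolding c_def by (auto split: if_splits)
    have "u1 \<in> F" using F12 by blast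
    then have nri: "b r i \<noteq> 0" using adjM[OF rM iM _ \<open>u1 \<in> F\<close>] ir by auto
    show "complementary F b i j" unfolding complementary_def jr
    proof (intro ballI impI)
      fix w assume w: "w \<in> F" and nz: "b i w \<noteq> 0 \<and> b r w \<noteq> 0"
      show "b i w * b r w < 0"
      proof (rule ccontr)
        assume "\<not> b i w * b r w < 0"
        then have "(b i w > 0 \<and> b r w > 0) \<or> (b i w < 0 \<and> b r w < 0)"
          using nz by (metis linorder_neqE_linordered_idom mult_neg_pos mult_pos_neg)
        then show False
        proof
          assume p: "b i w > 0 \<and> b r w > 0"
          obtain v where v: "v \<in> F" "b i v < 0" using notgreen[OF iM ng] by blast
          obtain v' where v': "v' \<in> F" "b r v' < 0" using notgreen[OF rM ng'] by blast
          have "v = v'" using two[OF w v(1) v'(1)] p v v' by auto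
          have vr: "b v r > 0" using v' \<open>v = v'\<close> anti[of v r] by simp
          show False
          proof (cases "b r i > 0")
            case True
            then have "b i v > 0" using fork_cross[OF fk[OF v(1)] rM inMu(1)[OF iM] inMu(2) True vr] by blast
            then show False using v by linarith
          next
            case False
            then have "b i r > 0" using nri anti[of i r] by linarith
            then have "b w i > 0" using fork_cross[OF fk[OF w] rM inMu(2) inMu(1)[OF iM]] p by blast
            then show False using p anti[of w i] by linarith
          qed
        next
          assume p: "b i w < 0 \<and> b r w < 0"
          obtain v where v: "v \<in> F" "b i v > 0" using notred[OF iM nr] by blast
          obtain v' where v': "v' \<in> F" "b r v' > 0" using notred[OF rM nr'] by blast
          have "v = v'" using two[OF w v(1) v'(1)] p v v' by auto
          have wr: "b w r > 0" using p anti[of w r] by linarith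
          show False
          proof (cases "b r i > 0")
            case True
            then have "b i w > 0" using fork_cross[OF fk[OF w] rM inMu(1)[OF iM] inMu(2) True wr] by blast
            then show False using p by linarith
          next
            case False
            then have "b i r > 0" using nri anti[of i r] by linarith
            then have "b v i > 0" using fork_cross[OF fk[OF v(1)] rM inMu(2) inMu(1)[OF iM]] v' \<open>v = v'\<close> by blast
            then show False using v anti[of v i] by linarith
          qed
        qed
      qed
    qed
  qed
  show ?thesis unfolding brog_def using C1 C2 C3 C4 C5 by blast
qed

end
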